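(* Let $u:\mathbb{R}^n\to(0,\infty)$ be a measurable function such that $u(x+y)\le u(x)\,u(y)$ for all $x,y\in\mathbb{R}^n$, and let $\Phi$ be a Young function. For $x\in\mathbb{R}^n$ and a function $f$ let $T_xf(y)=f(y-x)$. Then: (1) for all $f\in L^u_\Phi(\mathbb{R}^n)$ and all $x\in\mathbb{R}^n$, $\|T_xf\|_{L^u_\Phi(\mathbb{R}^n)}\le u(x)\|f\|_{L^u_\Phi(\mathbb{R}^n)}$; (2) if $f\in L^u_\Phi(\mathbb{R}^n)$ and $f\neq0$, then there exists a constant $C>0$ (depending on $f$) such that $\frac{u(x)}{C}\le \|T_xf\|_{L^u_\Phi(\mathbb{R}^n)}\le C\,u(x)$ for all $x\in\mathbb{R}^n$.
   Context: A Young function is a map $\Phi:[0,\infty)\to[0,\infty)$ that is convex, left-continuous, satisfies $\lim_{t\to0}\Phi(t)=0=\Phi(0)$ and $\lim_{t\to\infty}\Phi(t)=\infty$. For a Young function $\Phi$ and a measurable $u:\mathbb{R}^n\to(0,\infty)$, the weighted Orlicz space $L^u_\Phi(\mathbb{R}^n)$ is the set of measurable $f:\mathbb{R}^n\to\mathbb{R}$ such that $\int_{\mathbb{R}^n}\Phi(a|u(x)f(x)|)\,dx<\infty$ for some $a>0$, with norm $\|f\|_{L^u_\Phi(\mathbb{R}^n)}=\inf\{b>0:\int_{\mathbb{R}^n}\Phi(|u(x)f(x)|/b)\,dx\le1\}$ (Lebesgue measure). *)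

theory Defs
  imports "HOL-Analysis.Analysis"
begin

definition young_function :: "(real \<Rightarrow> real) \<Rightarrow> bool" where
  "young_function \<Phi> \<longleftrightarrow>
     (\<forall>t\<ge>0. \<Phi> t \<ge> 0) \<and>
     convex_on {0..} \<Phi> \<and>
     (\<forall>t>0. (\<Phi> \<longlongrightarrow> \<Phi> t) (at_left t)) \<and>
     \<Phi> 0 = 0 \<and> (\<Phi> \<longlongrightarrow> 0) (at_right 0) \<and>
     filterlim \<Phi> at_top at_top"

definition weighted_orlicz_space ::
  "(real \<Rightarrow> real) \<Rightarrow> ('a::euclidean_space \<Rightarrow> real) \<Rightarrow> ('a \<Rightarrow> real) set" where
  "weighted_orlicz_space \<Phi> u =
     {f. f \<in> borel_measurable lebesgue \<and>
         (\<exists>a>0. (\<integral>\<^sup>+ x. ennreal (\<Phi> (a * \<bar>u x * f x\<bar>)) \<partial>lebesgue) < \<infinity>)}"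

definition orlicz_norm ::
  "(real \<Rightarrow> real) \<Rightarrow> ('a::euclidean_space \<Rightarrow> real) \<Rightarrow> ('a \<Rightarrow> real) \<Rightarrow> real" where
  "orlicz_norm \<Phi> u f =
     Inf {b. b > 0 \<and> (\<integral>\<^sup>+ x. ennreal (\<Phi> (\<bar>u x * f x\<bar> / b)) \<partial>lebesgue) \<le> 1}"

definition translate :: "'a::euclidean_space \<Rightarrow> ('a \<Rightarrow> real) \<Rightarrow> ('a \<Rightarrow> real)" where
  "translate x f = (\<lambda>y. f (y - x))"

end

theory Submission imports Defs begin

lemma young_mono:
  assumes y: "young_function \<Phi>" and "0 \<le> s" "s \<le> t"
  shows "\<Phi> s \<le> \<Phi> t"
proof (cases "t = 0")
  case True then show ?thesis using assms by simp
next
  case False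
  then have t: "t > 0" using assms by simp
  have cv: "convex_on {0..} \<Phi>" and z: "\<Phi> 0 = 0" and nn: "\<Phi> t \<ge> 0"
    using y t unfolding young_function_def by auto
  have "\<Phi> ((1 - s/t) *\<^sub>R 0 + (s/t) *\<^sub>R t) \<le> (1 - s/t) * \<Phi> 0 + (s/t) * \<Phi> t"
    by (rule convex_onD[OF cv]) (use assms t in auto)
  also have "\<dots> = (s/t) * \<Phi> t" using z by simp
  also have "\<dots> \<le> 1 * \<Phi> t" using assms t nn by (intro mult_right_mono) auto
  finally show ?thesis using t by simp
qed

lemma young_scale:
  assumes y: "young_function \<Phi>" and "0 \<le> l" "l \<le> 1" "0 \<le> t"
  shows "\<Phi> (l * t) \<le> l * \<Phi> t"
proof -
  have cv: "convex_on {0..} \<Phi>" and z: "\<Phi> 0 = 0"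
    using y unfolding young_function_def by auto
  have "\<Phi> ((1 - l) *\<^sub>R 0 + l *\<^sub>R t) \<le> (1 - l) * \<Phi> 0 + l * \<Phi> t"
    by (rule convex_onD[OF cv]) (use assms in auto)
  then show ?thesis using z by simp
qed

lemma young_meas:
  assumes y: "young_function \<Phi>"
  shows "(\<lambda>t. \<Phi> (max 0 t)) \<in> borel_measurable borel"
  by (rule borel_measurable_mono) (auto simp: mono_def intro!: young_mono[OF y])

lemma lebesgue_translate_nn:
  fixes g :: "'a::euclidean_space \<Rightarrow> ennreal"
  assumes g: "g \<in> borel_measurable lebesgue"
  shows "(\<integral>\<^sup>+y. g y \<partial>lebesgue) = (\<integral>\<^sup>+y. g (t + y) \<partial>lebesgue)"
proof -
  have e: "lebesgue = distr lebesgue lebesgue (\<lambda>x::'a. t + x)"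
    using lebesgue_affine_euclidean[of "\<lambda>_. 1" t]
    by (simp add: density_1 euclidean_representation)
  have m: "(\<lambda>x::'a. t + x) \<in> lebesgue \<rightarrow>\<^sub>M lebesgue"
    using lebesgue_affine_measurable[of "\<lambda>_. 1" t]
    by (simp add: euclidean_representation)
  have "(\<integral>\<^sup>+y. g y \<partial>lebesgue) = (\<integral>\<^sup>+y. g y \<partial>distr lebesgue lebesgue (\<lambda>x::'a. t + x))"
    using e by simp
  also have "\<dots> = (\<integral>\<^sup>+y. g (t + y) \<partial>lebesgue)"
    using g by (intro nn_integral_distr[OF m]) (simp add: measurable_distr_eq1)
  finally show ?thesis .
qed


lemma young_comp_meas:
  assumes y: "young_function \<Phi>" and h: "h \<in> borel_measurable M" and nn: "\<And>x. h x \<ge> 0"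
  shows "(\<lambda>x. ennreal (\<Phi> (h x))) \<in> borel_measurable M"
proof -
  have "(\<lambda>x. \<Phi> (max 0 (h x))) \<in> borel_measurable M"
    using measurable_compose[OF h young_meas[OF y]] by (simp add: o_def)
  moreover have "(\<lambda>x. \<Phi> (max 0 (h x))) = (\<lambda>x. \<Phi> (h x))" using nn by (simp add: max_absorb2)
  ultimately show ?thesis by simp
qed

lemma orlicz_set_nonempty:
  fixes u :: "'a::euclidean_space \<Rightarrow> real"
  assumes y: "young_function \<Phi>" and um: "u \<in> borel_measurable lebesgue"
    and f: "f \<in> weighted_orlicz_space \<Phi> u"
  shows "\<exists>b>0. (\<integral>\<^sup>+ x. ennreal (\<Phi> (\<bar>u x * f x\<bar> / b)) \<partial>lebesgue) \<le> 1"
proof -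
  from f have fm: "f \<in> borel_measurable lebesgue" and
    "\<exists>a>0. (\<integral>\<^sup>+ x. ennreal (\<Phi> (a * \<bar>u x * f x\<bar>)) \<partial>lebesgue) < \<infinity>"
    unfolding weighted_orlicz_space_def by auto
  then obtain a where a: "a > 0" and I: "(\<integral>\<^sup>+ x. ennreal (\<Phi> (a * \<bar>u x * f x\<bar>)) \<partial>lebesgue) < \<infinity>"
    by blast
  define I where "I = (\<integral>\<^sup>+ x. ennreal (\<Phi> (a * \<bar>u x * f x\<bar>)) \<partial>lebesgue)"
  define r where "r = enn2real I"
  have r0: "r \<ge> 0" unfolding r_def by simp
  have Ir: "I = ennreal r" unfolding r_def using I I_def by (simp add: ennreal_enn2real_if less_top)
  define l where "l = 1 / (1 + r)"
  have l0: "0 < l" "l \<le> 1" using r0 unfolding l_def by auto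
  define b where "b = (1 + r) / a"
  have b0: "b > 0" using a r0 unfolding b_def by auto
  have meas: "(\<lambda>x. ennreal (\<Phi> (a * \<bar>u x * f x\<bar>))) \<in> borel_measurable lebesgue"
    by (rule young_comp_meas[OF y]) (use um fm a in auto)
  have "(\<integral>\<^sup>+ x. ennreal (\<Phi> (\<bar>u x * f x\<bar> / b)) \<partial>lebesgue)
      \<le> (\<integral>\<^sup>+ x. ennreal l * ennreal (\<Phi> (a * \<bar>u x * f x\<bar>)) \<partial>lebesgue)"
  proof (rule nn_integral_mono)
    fix x
    have "\<bar>u x * f x\<bar> / b = l * (a * \<bar>u x * f x\<bar>)"
      unfolding b_def l_def using a r0 by (simp add: field_simps)
    also have "\<Phi> \<dots> \<le> l * \<Phi> (a * \<bar>u x * f x\<bar>)"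
      by (rule young_scale[OF y]) (use l0 a in auto)
    finally show "ennreal (\<Phi> (\<bar>u x * f x\<bar> / b)) \<le> ennreal l * ennreal (\<Phi> (a * \<bar>u x * f x\<bar>))"
      using l0 by (simp add: ennreal_mult'[symmetric] ennreal_leI)
  qed
  also have "\<dots> = ennreal l * I"
    unfolding I_def by (rule nn_integral_cmult[OF meas])
  also have "\<dots> = ennreal (l * r)" using Ir l0 r0 by (simp add: ennreal_mult)
  also have "\<dots> \<le> 1" using r0 unfolding l_def by simp
  finally show ?thesis using b0 by blast
qed


lemma transl_in_set:
  fixes u :: "'a::euclidean_space \<Rightarrow> real"
  assumes y: "young_function \<Phi>" and um: "u \<in> borel_measurable lebesgue"
    and u_pos: "\<And>x. u x > 0" and u_submult: "\<And>x y. u (x + y) \<le> u x * u y"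
    and fm: "f \<in> borel_measurable lebesgue"
    and b: "b > 0" "(\<integral>\<^sup>+ y. ennreal (\<Phi> (\<bar>u y * f y\<bar> / b)) \<partial>lebesgue) \<le> 1"
  shows "(\<integral>\<^sup>+ y. ennreal (\<Phi> (\<bar>u y * translate x f y\<bar> / (u x * b))) \<partial>lebesgue) \<le> 1"
proof -
  have meas: "(\<lambda>y. ennreal (\<Phi> (\<bar>u y * f y\<bar> / b))) \<in> borel_measurable lebesgue"
    by (rule young_comp_meas[OF y]) (use um fm b in auto)
  have "(\<integral>\<^sup>+ y. ennreal (\<Phi> (\<bar>u y * translate x f y\<bar> / (u x * b))) \<partial>lebesgue)
     \<le> (\<integral>\<^sup>+ y. ennreal (\<Phi> (\<bar>u (-x + y) * f (-x + y)\<bar> / b)) \<partial>lebesgue)"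
  proof (rule nn_integral_mono)
    fix y
    have uy: "u y \<le> u x * u (y - x)" using u_submult[of x "y - x"] by simp
    have "\<bar>u y * f (y - x)\<bar> / (u x * b) = (u y / u x) * \<bar>f (y - x)\<bar> / b"
      using u_pos[of y] by (simp add: abs_mult)
    also have "\<dots> \<le> u (y - x) * \<bar>f (y - x)\<bar> / b"
    proof -
      have "u y / u x \<le> u (y - x)" using uy u_pos[of x] by (simp add: divide_le_eq mult.commute)
      then show ?thesis using b by (intro divide_right_mono mult_right_mono) auto
    qed
    also have "\<dots> = \<bar>u (-x + y) * f (-x + y)\<bar> / b"
      using u_pos[of "y - x"] by (simp add: abs_mult)
    finally have "\<bar>u y * f (y - x)\<bar> / (u x * b) \<le> \<bar>u (-x + y) * f (-x + y)\<bar> / b" .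
    then have "\<Phi> (\<bar>u y * f (y - x)\<bar> / (u x * b)) \<le> \<Phi> (\<bar>u (-x + y) * f (-x + y)\<bar> / b)"
      by (intro young_mono[OF y]) (use u_pos[of x] b in auto)
    then show "ennreal (\<Phi> (\<bar>u y * translate x f y\<bar> / (u x * b)))
        \<le> ennreal (\<Phi> (\<bar>u (-x + y) * f (-x + y)\<bar> / b))"
      unfolding translate_def by (rule ennreal_leI)
  qed
  also have "\<dots> = (\<integral>\<^sup>+ y. ennreal (\<Phi> (\<bar>u y * f y\<bar> / b)) \<partial>lebesgue)"
    using lebesgue_translate_nn[OF meas, of "-x"] by simp
  also have "\<dots> \<le> 1" by (rule b)
  finally show ?thesis .
qed

definition oset where
  "oset \<Phi> u f = {b. b > 0 \<and> (\<integral>\<^sup>+ x. ennreal (\<Phi> (\<bar>u x * f x\<bar> / b)) \<partial>lebesgue) \<le> 1}"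

lemma part1:
  fixes u :: "'a::euclidean_space \<Rightarrow> real"
  assumes y: "young_function \<Phi>" and um: "u \<in> borel_measurable lebesgue"
    and u_pos: "\<And>x. u x > 0" and u_submult: "\<And>x y. u (x + y) \<le> u x * u y"
    and f: "f \<in> weighted_orlicz_space \<Phi> u"
  shows "orlicz_norm \<Phi> u (translate x f) \<le> u x * orlicz_norm \<Phi> u f"
    and "oset \<Phi> u f \<noteq> {}" and "oset \<Phi> u (translate x f) \<noteq> {}"
    and "orlicz_norm \<Phi> u f \<ge> 0"
proof -
  have fm: "f \<in> borel_measurable lebesgue" using f unfolding weighted_orlicz_space_def by auto
  have ne: "oset \<Phi> u f \<noteq> {}" using orlicz_set_nonempty[OF y um f] unfolding oset_def by auto
  have bd: "bdd_below (oset \<Phi> u g)" for g unfolding oset_def by (rule bdd_belowI[of _ 0]) auto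
  have inT: "u x * b \<in> oset \<Phi> u (translate x f)" if "b \<in> oset \<Phi> u f" for b
    using that transl_in_set[OF y um u_pos u_submult fm, of b x] u_pos[of x]
    unfolding oset_def by auto
  have nT: "oset \<Phi> u (translate x f) \<noteq> {}" using ne inT by blast
  have "orlicz_norm \<Phi> u (translate x f) / u x \<le> orlicz_norm \<Phi> u f"
    unfolding orlicz_norm_def oset_def[symmetric]
  proof (rule cInf_greatest[OF ne])
    fix b assume "b \<in> oset \<Phi> u f"
    then have "Inf (oset \<Phi> u (translate x f)) \<le> u x * b" by (intro cInf_lower[OF inT bd])
    then show "Inf (oset \<Phi> u (translate x f)) / u x \<le> b"
      using u_pos[of x] by (simp add: divide_le_eq mult.commute)
  qed
  then show "orlicz_norm \<Phi> u (translate x f) \<le> u x * orlicz_norm \<Phi> u f"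
    using u_pos[of x] by (simp add: divide_le_eq mult.commute)
  show "oset \<Phi> u f \<noteq> {}" "oset \<Phi> u (translate x f) \<noteq> {}" by (fact ne) (fact nT)
  show "orlicz_norm \<Phi> u f \<ge> 0"
    unfolding orlicz_norm_def oset_def[symmetric]
    by (rule cInf_greatest[OF ne]) (auto simp: oset_def)
qed


lemma good_set:
  fixes u :: "'a::euclidean_space \<Rightarrow> real"
  assumes u_pos: "\<And>x. u x > 0" and um: "u \<in> borel_measurable lebesgue" and fm: "f \<in> borel_measurable lebesgue"
    and nz: "\<not> (AE x in lebesgue. f x = 0)"
  shows "\<exists>n::nat. {y. norm y < real n \<and> 1 / (real n + 1) \<le> \<bar>f y\<bar> \<and> u (- y) \<le> real n} \<in> sets lebesgue
     \<and> {y. norm y < real n \<and> 1 / (real n + 1) \<le> \<bar>f y\<bar> \<and> u (- y) \<le> real n} \<notin> null_sets lebesgue"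
proof (rule ccontr)
  define E where "E n = {y. norm y < real n \<and> 1 / (real n + 1) \<le> \<bar>f y\<bar> \<and> u (- y) \<le> real n}" for n :: nat
  have um2: "(\<lambda>y. u (- y)) \<in> borel_measurable lebesgue"
    using measurable_compose[OF lebesgue_measurable_scaling[of "-1"] um] by (simp add: o_def)
  have Em: "E n \<in> sets lebesgue" for n
  proof -
    have [measurable]: "(\<lambda>y. u (- y)) \<in> borel_measurable lebesgue" "f \<in> borel_measurable lebesgue"
      using um2 fm by auto
    have "{y \<in> space lebesgue. 1 / (real n + 1) \<le> \<bar>f y\<bar> \<and> u (- y) \<le> real n} \<in> sets lebesgue"
      by measurable
    moreover have "ball 0 (real n) \<in> sets lebesgue" using lmeasurable_ball fmeasurableD by blast
    ultimately have "ball 0 (real n) \<inter> {y \<in> space lebesgue. 1 / (real n + 1) \<le> \<bar>f y\<bar> \<and> u (- y) \<le> real n} \<in> sets lebesgue"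
      by blast
    moreover have "E n = ball 0 (real n) \<inter> {y \<in> space lebesgue. 1 / (real n + 1) \<le> \<bar>f y\<bar> \<and> u (- y) \<le> real n}"
      unfolding E_def by auto
    ultimately show ?thesis by simp
  qed
  assume "\<not> ?thesis"
  then have nul: "E n \<in> null_sets lebesgue" for n using Em unfolding E_def by auto
  have "(\<Union>n. E n) \<in> null_sets lebesgue" using nul by (intro null_sets_UN) auto
  moreover have "{x \<in> space lebesgue. \<not> f x = 0} \<subseteq> (\<Union>n. E n)"
  proof
    fix y assume "y \<in> {x \<in> space lebesgue. \<not> f x = 0}"
    then have fy: "f y \<noteq> 0" by simp
    obtain n :: nat where n: "norm y + u (- y) + 1 / \<bar>f y\<bar> < real n"
      using reals_Archimedean2 by blast
    have p1: "0 < 1 / \<bar>f y\<bar>" using fy by simp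
    have p2: "0 < u (- y)" by (rule u_pos)
    have a1: "1 / \<bar>f y\<bar> < real n + 1" using n p2 norm_ge_zero[of y] by linarith
    have a2: "norm y < real n" using n p1 p2 by linarith
    have a3: "u (- y) \<le> real n" using n p1 norm_ge_zero[of y] by linarith
    have "1 / (real n + 1) \<le> \<bar>f y\<bar>" using a1 p1 fy
      by (simp add: divide_simps mult.commute split: if_splits)
    then have "y \<in> E n" unfolding E_def using a2 a3 by simp
    then show "y \<in> (\<Union>n. E n)" by blast
  qed
  ultimately have "AE x in lebesgue. f x = 0" by (rule AE_I')
  then show False using nz by simp
qed


lemma part2:
  fixes u :: "'a::euclidean_space \<Rightarrow> real"
  assumes y: "young_function \<Phi>" and um: "u \<in> borel_measurable lebesgue"
    and u_pos: "\<And>x. u x > 0" and u_submult: "\<And>x y. u (x + y) \<le> u x * u y"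
    and f: "f \<in> weighted_orlicz_space \<Phi> u"
    and nz: "\<not> (AE x in lebesgue. f x = 0)"
  shows "\<exists>C>0. \<forall>x. u x / C \<le> orlicz_norm \<Phi> u (translate x f)
                        \<and> orlicz_norm \<Phi> u (translate x f) \<le> C * u x"
proof -
  have fm: "f \<in> borel_measurable lebesgue" using f unfolding weighted_orlicz_space_def by auto
  obtain n :: nat where
    Em: "{y. norm y < real n \<and> 1 / (real n + 1) \<le> \<bar>f y\<bar> \<and> u (- y) \<le> real n} \<in> sets lebesgue"
    and Enn: "{y. norm y < real n \<and> 1 / (real n + 1) \<le> \<bar>f y\<bar> \<and> u (- y) \<le> real n} \<notin> null_sets lebesgue"
    using good_set[OF u_pos um fm nz] by blast
  define E where "E = {y. norm y < real n \<and> 1 / (real n + 1) \<le> \<bar>f y\<bar> \<and> u (- y) \<le> real n}"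
  define \<delta> where "\<delta> = 1 / (real n + 1)"
  define M where "M = real n + 1"
  have d0: "\<delta> > 0" and M0: "M > 0" unfolding \<delta>_def M_def by auto
  have Esets: "E \<in> sets lebesgue" using Em unfolding E_def .
  have "emeasure lebesgue E \<le> emeasure lebesgue (ball (0::'a) (real n))"
  proof (rule emeasure_mono)
    show "E \<subseteq> ball (0::'a) (real n)" by (auto simp: E_def)
    show "ball (0::'a) (real n) \<in> sets lebesgue" using lmeasurable_ball fmeasurableD by blast
  qed
  also have "\<dots> < \<infinity>" using lmeasurable_ball[of 0 "real n"] by (simp add: fmeasurable_def)
  finally have Efin: "emeasure lebesgue E \<noteq> top" by simp
  define m where "m = measure lebesgue E"
  have Em_eq: "emeasure lebesgue E = ennreal m" unfolding m_def using emeasure_eq_ennreal_measure[OF Efin] .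
  have "emeasure lebesgue E \<noteq> 0" using Enn Esets unfolding E_def by auto
  then have m0: "m > 0" using Em_eq unfolding m_def by (simp add: measure_nonneg order.strict_iff_order)
  have "eventually (\<lambda>t. 2 / m \<le> \<Phi> t) at_top"
    using y unfolding young_function_def filterlim_at_top by blast
  then obtain N where N: "\<And>t. t \<ge> N \<Longrightarrow> 2 / m \<le> \<Phi> t" unfolding eventually_at_top_linorder by blast
  define t0 where "t0 = max N 1"
  have t00: "t0 > 0" unfolding t0_def by simp
  have Pt0: "\<Phi> t0 * m > 1"
  proof -
    have "2 / m \<le> \<Phi> t0" using N unfolding t0_def by simp
    then have "2 \<le> \<Phi> t0 * m" using m0 by (simp add: divide_le_eq)
    then show ?thesis by simp
  qed
  have Pt0nn: "\<Phi> t0 \<ge> 0" using y t00 unfolding young_function_def by auto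
  have lower: "u x * \<delta> / (M * t0) \<le> orlicz_norm \<Phi> u (translate x f)" for x
    unfolding orlicz_norm_def oset_def[symmetric]
  proof (rule cInf_greatest[OF part1(3)[OF y um u_pos u_submult f]])
    fix b assume b: "b \<in> oset \<Phi> u (translate x f)"
    then have b0: "b > 0" and bI: "(\<integral>\<^sup>+ y. ennreal (\<Phi> (\<bar>u y * translate x f y\<bar> / b)) \<partial>lebesgue) \<le> 1"
      unfolding oset_def by auto
    show "u x * \<delta> / (M * t0) \<le> b"
    proof (rule ccontr)
      assume "\<not> ?thesis"
      then have bl: "b < u x * \<delta> / (M * t0)" by simp
      have "ennreal (\<Phi> t0 * m) = ennreal (\<Phi> t0) * emeasure lebesgue E"
        using Em_eq Pt0nn m0 by (simp add: ennreal_mult)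
      also have "\<dots> = (\<integral>\<^sup>+ y. ennreal (\<Phi> t0) * indicator E y \<partial>lebesgue)"
        by (rule nn_integral_cmult_indicator[OF Esets, symmetric])
      also have "\<dots> = (\<integral>\<^sup>+ y. ennreal (\<Phi> t0) * indicator E (-x + y) \<partial>lebesgue)"
        by (rule lebesgue_translate_nn) (use Esets in measurable)
      also have "\<dots> \<le> (\<integral>\<^sup>+ y. ennreal (\<Phi> (\<bar>u y * translate x f y\<bar> / b)) \<partial>lebesgue)"
      proof (rule nn_integral_mono)
        fix y
        show "ennreal (\<Phi> t0) * indicator E (-x + y) \<le> ennreal (\<Phi> (\<bar>u y * translate x f y\<bar> / b))"
        proof (cases "-x + y \<in> E")
          case False then show ?thesis by simp
        next
          case True
          then have fy: "\<delta> \<le> \<bar>f (y - x)\<bar>" and uy: "u (x - y) \<le> M"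
            unfolding E_def \<delta>_def M_def by (auto simp: algebra_simps)
          have "u x \<le> u y * u (x - y)" using u_submult[of y "x - y"] by simp
          also have "\<dots> \<le> u y * M" using uy u_pos[of y] by (intro mult_left_mono) auto
          finally have ux: "u x / M \<le> u y" using M0 by (simp add: divide_le_eq)
          have "t0 < u x * \<delta> / (M * b)"
            using bl b0 M0 t00 by (simp add: field_simps)
          also have "\<dots> = (u x / M) * \<delta> / b" by simp
          also have "\<dots> \<le> u y * \<bar>f (y - x)\<bar> / b"
            using ux fy b0 d0 M0 u_pos[of x] u_pos[of y] by (intro divide_right_mono mult_mono) auto
          also have "\<dots> = \<bar>u y * translate x f y\<bar> / b"
            using u_pos[of y] by (simp add: translate_def abs_mult)
          finally have "\<Phi> t0 \<le> \<Phi> (\<bar>u y * translate x f y\<bar> / b)"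
            by (intro young_mono[OF y]) (use t00 in auto)
          then show ?thesis using True by (simp add: ennreal_leI)
        qed
      qed
      also have "\<dots> \<le> 1" by (rule bI)
      finally have "\<Phi> t0 * m \<le> 1" by (simp add: ennreal_le_1)
      then show False using Pt0 by simp
    qed
  qed
  define C where "C = M * t0 / \<delta> + orlicz_norm \<Phi> u f + 1"
  have nf: "orlicz_norm \<Phi> u f \<ge> 0" by (rule part1(4)[OF y um u_pos u_submult f])
  have C1: "M * t0 / \<delta> \<le> C" and C2: "orlicz_norm \<Phi> u f \<le> C" and C0: "C > 0"
  proof -
    have "M * t0 / \<delta> > 0" using M0 t00 d0 by simp
    then show "M * t0 / \<delta> \<le> C" "orlicz_norm \<Phi> u f \<le> C" "C > 0"
      unfolding C_def using nf by auto
  qed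
  show ?thesis
  proof (intro exI[of _ C] conjI allI C0)
    fix x
    have "u x / C \<le> u x / (M * t0 / \<delta>)"
      using C1 M0 t00 d0 u_pos[of x] C0 by (intro divide_left_mono) auto
    also have "\<dots> = u x * \<delta> / (M * t0)" by simp
    also have "\<dots> \<le> orlicz_norm \<Phi> u (translate x f)" by (rule lower)
    finally show "u x / C \<le> orlicz_norm \<Phi> u (translate x f)" .
    have "orlicz_norm \<Phi> u (translate x f) \<le> u x * orlicz_norm \<Phi> u f"
      by (rule part1(1)[OF y um u_pos u_submult f])
    also have "\<dots> \<le> C * u x" using C2 u_pos[of x] by (simp add: mult.commute mult_left_mono)
    finally show "orlicz_norm \<Phi> u (translate x f) \<le> C * u x" .
  qed
qed

theorem lemma2p6:
  fixes u :: "'a::euclidean_space \<Rightarrow> real" and \<Phi> :: "real \<Rightarrow> real"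
  assumes u_meas: "u \<in> borel_measurable lebesgue"
    and u_pos: "\<And>x. u x > 0"
    and u_submult: "\<And>x y. u (x + y) \<le> u x * u y"
    and young: "young_function \<Phi>"
  shows "(\<forall>f \<in> weighted_orlicz_space \<Phi> u. \<forall>x.
            orlicz_norm \<Phi> u (translate x f) \<le> u x * orlicz_norm \<Phi> u f)
       \<and> (\<forall>f \<in> weighted_orlicz_space \<Phi> u. \<not> (AE x in lebesgue. f x = 0) \<longrightarrow>
            (\<exists>C>0. \<forall>x. u x / C \<le> orlicz_norm \<Phi> u (translate x f)
                        \<and> orlicz_norm \<Phi> u (translate x f) \<le> C * u x))"
  using part1(1)[OF young u_meas u_pos u_submult] part2[OF young u_meas u_pos u_submult]
  by blast

end
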